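(* For all $0<b\le B\le1$ and every integer $n\ge1$, $$\textsc{PoF-Reward-Submodular}(b,B)=\textsc{PoF-Welfare-Submodular}(b,B)=\min\big(\lceil 2B/b\rceil-1,\,n\big)\le\min(2B/b,\,n).$$
   Context: An instance $\langle A,f,c\rangle$ consists of a finite set $A$ of agents, a monotone nondecreasing $f:2^A\to[0,1]$, and costs $c_i\ge0$. For $S\subseteq A$, $i\in S$: $f_S(i)=f(S)-f(S\setminus\{i\})$; $p(S)=\sum_{i\in S}c_i/f_S(i)$ (conventions: $0$ if $c_i=0=f_S(i)$, $\infty$ if $c_i>0=f_S(i)$). $f$ is submodular if $f_S(i)\ge f_{S'}(i)$ whenever $S\subseteq S'$, $i\in S$. For an objective $\varphi$ (assigning to each instance and $S\subseteq A$ a real $\varphi(S)$), $\textsc{Max-}\varphi(B)=\max\{\varphi(S):p(S)\le B\}$ and, for an instance, $\textsc{PoF-}\varphi(b,B)=\textsc{Max-}\varphi(B)/\textsc{Max-}\varphi(b)$. The reward objective is $\varphi(S)=f(S)$ and the welfare objective is $\varphi(S)=f(S)-\sum_{i\in S}c_i$. $\textsc{PoF-Reward-Submodular}(b,B)$ (resp. $\textsc{PoF-Welfare-Submodular}(b,B)$) is the supremum of $\textsc{PoF-}\varphi(b,B)$ for the reward (resp. welfare) objective over all instances with submodular $f$, at most $n$ agents, and $\max_{i\in A}p(\{i\})\le b$. *)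

theory Defs
  imports "HOL-Analysis.Analysis"
begin

definition marg :: "(nat set \<Rightarrow> real) \<Rightarrow> nat set \<Rightarrow> nat \<Rightarrow> real" where
  "marg f S i = f S - f (S - {i})"

definition pay :: "(nat set \<Rightarrow> real) \<Rightarrow> (nat \<Rightarrow> real) \<Rightarrow> nat set \<Rightarrow> ereal" where
  "pay f c S = (\<Sum>i\<in>S. if marg f S i = 0 then (if c i = 0 then 0 else \<infinity>)
                        else ereal (c i / marg f S i))"

definition valid_instance :: "nat set \<Rightarrow> (nat set \<Rightarrow> real) \<Rightarrow> (nat \<Rightarrow> real) \<Rightarrow> bool" where
  "valid_instance A f c \<longleftrightarrow> finite A
     \<and> (\<forall>S. S \<subseteq> A \<longrightarrow> 0 \<le> f S \<and> f S \<le> 1)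
     \<and> (\<forall>S T. S \<subseteq> T \<longrightarrow> T \<subseteq> A \<longrightarrow> f S \<le> f T)
     \<and> (\<forall>i\<in>A. 0 \<le> c i)"

definition submodular_on :: "nat set \<Rightarrow> (nat set \<Rightarrow> real) \<Rightarrow> bool" where
  "submodular_on A f \<longleftrightarrow>
     (\<forall>S S' i. S \<subseteq> S' \<longrightarrow> S' \<subseteq> A \<longrightarrow> i \<in> S \<longrightarrow> marg f S' i \<le> marg f S i)"

definition reward_obj :: "(nat set \<Rightarrow> real) \<Rightarrow> (nat \<Rightarrow> real) \<Rightarrow> nat set \<Rightarrow> real" where
  "reward_obj f c S = f S"

definition welfare_obj :: "(nat set \<Rightarrow> real) \<Rightarrow> (nat \<Rightarrow> real) \<Rightarrow> nat set \<Rightarrow> real" where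
  "welfare_obj f c S = f S - (\<Sum>i\<in>S. c i)"

definition max_obj ::
  "((nat set \<Rightarrow> real) \<Rightarrow> (nat \<Rightarrow> real) \<Rightarrow> nat set \<Rightarrow> real)
   \<Rightarrow> nat set \<Rightarrow> (nat set \<Rightarrow> real) \<Rightarrow> (nat \<Rightarrow> real) \<Rightarrow> real \<Rightarrow> real" where
  "max_obj phi A f c B = Max {phi f c S | S. S \<subseteq> A \<and> pay f c S \<le> ereal B}"

definition pof ::
  "((nat set \<Rightarrow> real) \<Rightarrow> (nat \<Rightarrow> real) \<Rightarrow> nat set \<Rightarrow> real)
   \<Rightarrow> nat set \<Rightarrow> (nat set \<Rightarrow> real) \<Rightarrow> (nat \<Rightarrow> real) \<Rightarrow> real \<Rightarrow> real \<Rightarrow> real" where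
  "pof phi A f c b B = max_obj phi A f c B / max_obj phi A f c b"

definition PoF_Submodular ::
  "((nat set \<Rightarrow> real) \<Rightarrow> (nat \<Rightarrow> real) \<Rightarrow> nat set \<Rightarrow> real) \<Rightarrow> nat \<Rightarrow> real \<Rightarrow> real \<Rightarrow> ereal" where
  "PoF_Submodular phi n b B =
     (SUP I \<in> {(A, f, c). valid_instance A f c \<and> submodular_on A f \<and> card A \<le> n
                 \<and> (\<forall>i\<in>A. pay f c {i} \<le> ereal b)}.
        ereal (case I of (A, f, c) \<Rightarrow> pof phi A f c b B))"

abbreviation "PoF_Reward_Submodular \<equiv> PoF_Submodular reward_obj"
abbreviation "PoF_Welfare_Submodular \<equiv> PoF_Submodular welfare_obj"

end

theory Submission imports Defs begin


definition goodpart :: "real \<Rightarrow> (nat \<Rightarrow> real) \<Rightarrow> nat set \<Rightarrow> nat set set \<Rightarrow> bool" where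
 "goodpart b w S PP \<longleftrightarrow> finite PP \<and> \<Union>PP = S \<and> (\<forall>P\<in>PP. P \<noteq> {} \<and> (card P = 1 \<or> sum w P \<le> b))
    \<and> (\<forall>P\<in>PP. \<forall>Q\<in>PP. P \<noteq> Q \<longrightarrow> P \<inter> Q = {})"

lemma goodpart_single:
  assumes "finite S"
  shows "goodpart b w S ((\<lambda>i. {i}) ` S)"
  using assms unfolding goodpart_def by auto

lemma card_single_part: "card ((\<lambda>i. {i}) ` S) = card S"
  by (simp add: card_image inj_on_def)

lemma goodpart_merge:
  assumes g: "goodpart b w S PP" and P: "P \<in> PP" and Q: "Q \<in> PP" and ne: "P \<noteq> Q"
    and le: "sum w (P \<union> Q) \<le> b"
  shows "goodpart b w S (insert (P \<union> Q) (PP - {P, Q}))"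
    and "card (insert (P \<union> Q) (PP - {P, Q})) < card PP"
proof -
  have fin: "finite PP" and un: "\<Union>PP = S" and pr: "\<forall>P\<in>PP. P \<noteq> {} \<and> (card P = 1 \<or> sum w P \<le> b)"
    and dj: "\<forall>P\<in>PP. \<forall>Q\<in>PP. P \<noteq> Q \<longrightarrow> P \<inter> Q = {}" using g unfolding goodpart_def by auto
  have djr: "\<And>X Y. X \<in> PP \<Longrightarrow> Y \<in> PP \<Longrightarrow> X \<noteq> Y \<Longrightarrow> X \<inter> Y = {}"
    using dj by blast
  have notin: "P \<union> Q \<notin> PP - {P, Q}"
  proof
    assume a: "P \<union> Q \<in> PP - {P, Q}"
    then have R: "P \<union> Q \<in> PP" by simp
    from a have "P \<union> Q \<noteq> P" by simp
    from djr[OF R P this] have "P = {}" by blast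
    with pr P show False by blast
  qed
  have U: "\<Union> (insert (P \<union> Q) (PP - {P, Q})) = \<Union>PP"
  proof
    show "\<Union> (insert (P \<union> Q) (PP - {P, Q})) \<subseteq> \<Union>PP" using P Q by auto
    show "\<Union>PP \<subseteq> \<Union> (insert (P \<union> Q) (PP - {P, Q}))"
    proof
      fix x assume "x \<in> \<Union>PP"
      then obtain R where R: "R \<in> PP" "x \<in> R" by blast
      show "x \<in> \<Union> (insert (P \<union> Q) (PP - {P, Q}))"
      proof (cases "R = P \<or> R = Q")
        case True then show ?thesis using R by auto
      next
        case False then show ?thesis using R by auto
      qed
    qed
  qed
  show "goodpart b w S (insert (P \<union> Q) (PP - {P, Q}))"
    unfolding goodpart_def
  proof (intro conjI)
    show "finite (insert (P \<union> Q) (PP - {P, Q}))" using fin by simp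
    show "\<Union> (insert (P \<union> Q) (PP - {P, Q})) = S" using un U by simp
    show "\<forall>R\<in>insert (P \<union> Q) (PP - {P, Q}). R \<noteq> {} \<and> (card R = 1 \<or> sum w R \<le> b)"
    proof
      fix R assume "R \<in> insert (P \<union> Q) (PP - {P, Q})"
      then have "R = P \<union> Q \<or> R \<in> PP" by blast
      then show "R \<noteq> {} \<and> (card R = 1 \<or> sum w R \<le> b)"
      proof
        assume "R = P \<union> Q" then show ?thesis using pr P le by simp
      next
        assume "R \<in> PP" then show ?thesis using pr by simp
      qed
    qed
    show "\<forall>R\<in>insert (P \<union> Q) (PP - {P, Q}). \<forall>R'\<in>insert (P \<union> Q) (PP - {P, Q}). R \<noteq> R' \<longrightarrow> R \<inter> R' = {}"
    proof (intro ballI impI)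
      fix R R' assume R: "R \<in> insert (P \<union> Q) (PP - {P, Q})" and R': "R' \<in> insert (P \<union> Q) (PP - {P, Q})"
        and ne': "R \<noteq> R'"
      show "R \<inter> R' = {}"
      proof (cases "R = P \<union> Q")
        case True
        then have "R' \<in> PP" "R' \<noteq> P" "R' \<noteq> Q" using R' ne' by auto
        then have "P \<inter> R' = {}" "Q \<inter> R' = {}" using djr P Q by metis+
        then show ?thesis using True by blast
      next
        case False
        then have Rin: "R \<in> PP" "R \<noteq> P" "R \<noteq> Q" using R by auto
        show ?thesis
        proof (cases "R' = P \<union> Q")
          case True
          then have "R \<inter> P = {}" "R \<inter> Q = {}" using djr P Q Rin by metis+
          then show ?thesis using True by blast
        next
          case False
          then have "R' \<in> PP" using R' by auto
          then show ?thesis using djr Rin ne' by metis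
        qed
      qed
    qed
  qed
  have "card (insert (P \<union> Q) (PP - {P, Q})) = card (PP - {P, Q}) + 1"
    using fin notin by simp
  also have "card (PP - {P, Q}) = card PP - 2"
    using fin P Q ne by (simp add: card_Diff_subset)
  also have "card PP \<ge> 2"
  proof -
    have "{P, Q} \<subseteq> PP" using P Q by auto
    then have "card {P, Q} \<le> card PP" using fin by (rule card_mono[rotated])
    then show ?thesis using ne by simp
  qed
  then have "card PP - 2 + 1 < card PP" by simp
  finally show "card (insert (P \<union> Q) (PP - {P, Q})) < card PP" by simp
qed

lemma binpack:
  assumes fS: "finite S" and neS: "S \<noteq> {}" and wpos: "\<forall>i\<in>S. 0 \<le> w i" and bpos: "0 < b"
  shows "\<exists>PP. goodpart b w S PP \<and> card PP \<le> card S
              \<and> (card PP = 1 \<or> real (card PP) * b / 2 < sum w S)"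
proof -
  define m where "m = (LEAST m. \<exists>PP. goodpart b w S PP \<and> card PP = m)"
  have ex: "\<exists>PP. goodpart b w S PP \<and> card PP = card S"
    using goodpart_single[OF fS] card_single_part by blast
  have "\<exists>PP. goodpart b w S PP \<and> card PP = m"
    unfolding m_def by (rule LeastI_ex) (use ex in blast)
  then obtain PP where g: "goodpart b w S PP" and cm: "card PP = m" by blast
  have mle: "m \<le> card S" unfolding m_def by (rule Least_le) (use ex in blast)
  have minim: "\<And>PP'. goodpart b w S PP' \<Longrightarrow> m \<le> card PP'"
    unfolding m_def by (rule Least_le) blast
  have fin: "finite PP" and un: "\<Union>PP = S" and pr: "\<forall>P\<in>PP. P \<noteq> {} \<and> (card P = 1 \<or> sum w P \<le> b)"
    and dj: "\<forall>P\<in>PP. \<forall>Q\<in>PP. P \<noteq> Q \<longrightarrow> P \<inter> Q = {}" using g unfolding goodpart_def by auto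
  have finP: "\<And>P. P \<in> PP \<Longrightarrow> finite P" using un fS by (metis Sup_upper finite_subset)
  have nomerge: "\<And>P Q. P \<in> PP \<Longrightarrow> Q \<in> PP \<Longrightarrow> P \<noteq> Q \<Longrightarrow> sum w P + sum w Q > b"
  proof -
    fix P Q assume P: "P \<in> PP" and Q: "Q \<in> PP" and ne: "P \<noteq> Q"
    have eq: "sum w (P \<union> Q) = sum w P + sum w Q"
      using dj P Q ne finP by (simp add: sum.union_disjoint)
    show "sum w P + sum w Q > b"
    proof (rule ccontr)
      assume "\<not> ?thesis"
      then have "sum w (P \<union> Q) \<le> b" using eq by simp
      from goodpart_merge[OF g P Q ne this] minim cm show False by fastforce
    qed
  qed
  have tot: "sum w S = (\<Sum>P\<in>PP. sum w P)"
    using sum.Union_disjoint[of PP w] finP dj un by auto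
  have "PP \<noteq> {}" using un neS by auto
  then have m1: "m \<ge> 1" using cm fin by (metis Suc_leI card_gt_0_iff One_nat_def)
  have "card PP = 1 \<or> real (card PP) * b / 2 < sum w S"
  proof (cases "m = 1")
    case True then show ?thesis using cm by simp
  next
    case False
    then have m2: "m \<ge> 2" using m1 by simp
    have "Min (sum w ` PP) \<in> sum w ` PP" using \<open>PP \<noteq> {}\<close> fin by (intro Min_in) auto
    then obtain P0 where P0: "P0 \<in> PP" and P0e: "sum w P0 = Min (sum w ` PP)" by auto
    have P0min: "\<forall>Q\<in>PP. sum w P0 \<le> sum w Q" using P0e fin by simp
    define w0 where "w0 = sum w P0"
    have cD: "card (PP - {P0}) = m - 1" using cm P0 fin by simp
    have nn: "(PP - {P0}) \<noteq> {}"
    proof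
      assume e: "PP - {P0} = {}"
      have "card (PP - {P0}) = 0" unfolding e by simp
      then show False using cD m2 by simp
    qed
    have s1: "(\<Sum>Q\<in>PP - {P0}. sum w Q) > (\<Sum>Q\<in>PP - {P0}. b - w0)"
    proof (rule sum_strict_mono)
      show "finite (PP - {P0})" using fin by simp
      show "PP - {P0} \<noteq> {}" by (rule nn)
      fix Q assume "Q \<in> PP - {P0}"
      then have "Q \<in> PP" "P0 \<noteq> Q" by auto
      from nomerge[OF P0 this] show "b - w0 < sum w Q" unfolding w0_def by simp
    qed
    have s2: "(\<Sum>Q\<in>PP - {P0}. sum w Q) \<ge> (\<Sum>Q\<in>PP - {P0}. w0)"
      by (rule sum_mono) (use P0min w0_def in auto)
    have split: "sum w S = w0 + (\<Sum>Q\<in>PP - {P0}. sum w Q)"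
      using tot fin P0 w0_def by (simp add: sum.remove)
    have mr: "real (m - 1) = real m - 1" using m1 by simp
    have A1: "sum w S > w0 + (real m - 1) * (b - w0)" using s1 split cD mr by simp
    have A2: "sum w S \<ge> w0 + (real m - 1) * w0" using s2 split cD mr by simp
    have mr2: "real m \<ge> 2" using m2 by simp
    have "real m * b / 2 < sum w S"
    proof (cases "w0 \<le> b / 2")
      case True
      have "(real m - 2) * (b/2 - w0) \<ge> 0" using True mr2 by simp
      then show ?thesis using A1 by (simp add: algebra_simps)
    next
      case False
      have "real m * w0 > real m * (b/2)" using False mr2 by simp
      then show ?thesis using A2 by (simp add: algebra_simps)
    qed
    then show ?thesis using cm by simp
  qed
  then show ?thesis using g cm mle by (intro exI[of _ PP]) simp
qed




lemma vi_facts: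
  assumes "valid_instance A f c"
  shows "finite A" "\<And>S. S \<subseteq> A \<Longrightarrow> 0 \<le> f S" "\<And>S. S \<subseteq> A \<Longrightarrow> f S \<le> 1"
    "\<And>S T. S \<subseteq> T \<Longrightarrow> T \<subseteq> A \<Longrightarrow> f S \<le> f T" "\<And>i. i \<in> A \<Longrightarrow> 0 \<le> c i"
  using assms unfolding valid_instance_def by auto

lemma marg_nonneg:
  assumes "valid_instance A f c" "S \<subseteq> A"
  shows "0 \<le> marg f S i"
  using vi_facts(4)[OF assms(1), of "S - {i}" S] assms(2) unfolding marg_def by auto

lemma sub_union:
  assumes vi: "valid_instance A f c" and sm: "submodular_on A f"
    and fX: "finite X"
  shows "X \<inter> Y = {} \<Longrightarrow> X \<union> Y \<subseteq> A \<Longrightarrow> f (X \<union> Y) - f Y \<le> f X - f {}"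
  using fX
proof (induction X rule: finite_induct)
  case empty then show ?case by simp
next
  case (insert x F)
  have xF: "x \<notin> F \<union> Y" using insert by auto
  have e1: "insert x (F \<union> Y) - {x} = F \<union> Y" using xF by auto
  have e2: "insert x F - {x} = F" using insert by auto
  have "marg f (insert x (F \<union> Y)) x \<le> marg f (insert x F) x"
    using sm insert.prems unfolding submodular_on_def by (metis insert_is_Un Un_assoc Un_upper1 insertI1)
  then have m: "f (insert x (F \<union> Y)) - f (F \<union> Y) \<le> f (insert x F) - f F"
    unfolding marg_def e1 e2 .
  have ih: "f (F \<union> Y) - f Y \<le> f F - f {}" using insert by auto
  have e3: "insert x F \<union> Y = insert x (F \<union> Y)" by simp
  show ?case unfolding e3 using m ih by linarith
qed

lemma subadd_aux:
  assumes vi: "valid_instance A f c" and sm: "submodular_on A f"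
    and fin: "finite PP"
  shows "(\<forall>P\<in>PP. finite P) \<Longrightarrow> (\<forall>P\<in>PP. \<forall>Q\<in>PP. P \<noteq> Q \<longrightarrow> P \<inter> Q = {}) \<Longrightarrow> \<Union>PP \<subseteq> A
     \<Longrightarrow> f (\<Union>PP) - f {} \<le> (\<Sum>P\<in>PP. f P - f {})"
  using fin
proof (induction PP rule: finite_induct)
  case empty then show ?case by simp
next
  case (insert P F)
  have fP: "finite P" and fF: "\<forall>P\<in>F. finite P" using insert.prems(1) by auto
  have djF: "\<forall>P\<in>F. \<forall>Q\<in>F. P \<noteq> Q \<longrightarrow> P \<inter> Q = {}" using insert.prems(2) by auto
  have sF: "\<Union>F \<subseteq> A" and sP: "P \<union> \<Union>F \<subseteq> A" using insert.prems(3) by auto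
  have d: "P \<inter> \<Union>F = {}"
  proof -
    { fix Q assume Q: "Q \<in> F"
      then have "P \<noteq> Q" using insert.hyps(2) by auto
      then have "P \<inter> Q = {}" using insert.prems(2) Q by simp }
    then show ?thesis by blast
  qed
  have "f (P \<union> \<Union>F) - f (\<Union>F) \<le> f P - f {}"
    by (rule sub_union[OF vi sm fP d sP])
  moreover have "f (\<Union>F) - f {} \<le> (\<Sum>P\<in>F. f P - f {})" by (rule insert.IH[OF fF djF sF])
  ultimately show ?case using insert.hyps by simp
qed

lemma subadd:
  assumes vi: "valid_instance A f c" and sm: "submodular_on A f"
    and fin: "finite PP" and ne: "PP \<noteq> {}" and "\<forall>P\<in>PP. finite P"
    and "\<forall>P\<in>PP. \<forall>Q\<in>PP. P \<noteq> Q \<longrightarrow> P \<inter> Q = {}" and sub: "\<Union>PP \<subseteq> A"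
  shows "f (\<Union>PP) \<le> (\<Sum>P\<in>PP. f P)"
proof -
  have a: "f (\<Union>PP) - f {} \<le> (\<Sum>P\<in>PP. f P) - real (card PP) * f {}"
    using subadd_aux[OF vi sm fin] assms by (simp add: sum_subtractf)
  have "card PP \<ge> 1" using fin ne by (metis One_nat_def Suc_leI card_gt_0_iff)
  moreover have "f {} \<ge> 0" using vi_facts(2)[OF vi] by simp
  ultimately have "real (card PP) * f {} \<ge> f {}"
    using mult_right_mono[of 1 "real (card PP)" "f {}"] by simp
  then show ?thesis using a by simp
qed

lemma phi_subadd:
  assumes ph: "phi = reward_obj \<or> phi = welfare_obj"
    and vi: "valid_instance A f c" and sm: "submodular_on A f"
    and fin: "finite PP" and ne: "PP \<noteq> {}" and fP: "\<forall>P\<in>PP. finite P"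
    and dj: "\<forall>P\<in>PP. \<forall>Q\<in>PP. P \<noteq> Q \<longrightarrow> P \<inter> Q = {}" and sub: "\<Union>PP \<subseteq> A"
  shows "phi f c (\<Union>PP) \<le> (\<Sum>P\<in>PP. phi f c P)"
proof -
  have fs: "f (\<Union>PP) \<le> (\<Sum>P\<in>PP. f P)" by (rule subadd[OF vi sm fin ne fP dj sub])
  have cs: "sum c (\<Union>PP) = (\<Sum>P\<in>PP. sum c P)"
    using sum.Union_disjoint[of PP c] fP dj by simp
  show ?thesis using ph
  proof
    assume "phi = reward_obj" then show ?thesis using fs unfolding reward_obj_def by simp
  next
    assume "phi = welfare_obj" then show ?thesis using fs cs unfolding welfare_obj_def
      by (simp add: sum_subtractf)
  qed
qed

lemma phi_empty:
  assumes "phi = reward_obj \<or> phi = welfare_obj"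
  shows "phi f c {} = f {}"
  using assms unfolding reward_obj_def welfare_obj_def by auto

lemma pay_empty: "pay f c {} = 0" unfolding pay_def by simp




lemma maxobj_facts:
  assumes vi: "valid_instance A f c" and x: "0 \<le> x"
  shows "\<And>S. S \<subseteq> A \<Longrightarrow> pay f c S \<le> ereal x \<Longrightarrow> phi f c S \<le> max_obj phi A f c x"
    and "\<exists>S. S \<subseteq> A \<and> pay f c S \<le> ereal x \<and> phi f c S = max_obj phi A f c x"
proof -
  let ?M = "{phi f c S | S. S \<subseteq> A \<and> pay f c S \<le> ereal x}"
  have fA: "finite A" using vi_facts(1)[OF vi] .
  have "?M \<subseteq> (phi f c) ` Pow A" by auto
  then have fin: "finite ?M" using fA by (meson finite_Pow_iff finite_imageI finite_subset)
  have "phi f c {} \<in> ?M" using x by (auto simp: pay_empty)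
  then have ne: "?M \<noteq> {}" by blast
  show "\<And>S. S \<subseteq> A \<Longrightarrow> pay f c S \<le> ereal x \<Longrightarrow> phi f c S \<le> max_obj phi A f c x"
  proof -
    fix S assume "S \<subseteq> A" "pay f c S \<le> ereal x"
    then have "phi f c S \<in> ?M" by blast
    then show "phi f c S \<le> max_obj phi A f c x" unfolding max_obj_def by (rule Max_ge[OF fin])
  qed
  have "max_obj phi A f c x \<in> ?M" unfolding max_obj_def using fin ne by (rule Max_in)
  then show "\<exists>S. S \<subseteq> A \<and> pay f c S \<le> ereal x \<and> phi f c S = max_obj phi A f c x" by auto
qed

definition wts :: "(nat set \<Rightarrow> real) \<Rightarrow> (nat \<Rightarrow> real) \<Rightarrow> nat set \<Rightarrow> nat \<Rightarrow> real" where
  "wts f c S i = (if marg f S i = 0 then 0 else c i / marg f S i)"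

lemma wts_nonneg:
  assumes vi: "valid_instance A f c" and "S \<subseteq> A" "i \<in> S"
  shows "0 \<le> wts f c S i"
  using marg_nonneg[OF vi assms(2), of i] vi_facts(5)[OF vi, of i] assms unfolding wts_def by auto

lemma pay_S:
  assumes vi: "valid_instance A f c" and S: "S \<subseteq> A" and p: "pay f c S \<le> ereal B"
  shows "\<forall>i\<in>S. marg f S i = 0 \<longrightarrow> c i = 0" and "pay f c S = ereal (sum (wts f c S) S)"
proof -
  have fS: "finite S" using vi_facts(1)[OF vi] S by (rule finite_subset[rotated])
  show z: "\<forall>i\<in>S. marg f S i = 0 \<longrightarrow> c i = 0"
  proof (intro ballI impI, rule ccontr)
    fix i assume i: "i \<in> S" and m: "marg f S i = 0" and ci: "c i \<noteq> 0"
    have "pay f c S = \<infinity>" unfolding pay_def sum_Pinfty using fS i m ci by auto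
    then show False using p by simp
  qed
  have "pay f c S = (\<Sum>i\<in>S. ereal (wts f c S i))"
    unfolding pay_def
  proof (rule sum.cong)
    fix i assume i: "i \<in> S"
    show "(if marg f S i = 0 then if c i = 0 then 0 else \<infinity> else ereal (c i / marg f S i)) = ereal (wts f c S i)"
    proof (cases "marg f S i = 0")
      case True then show ?thesis using z i unfolding wts_def by simp
    next
      case False then show ?thesis unfolding wts_def by simp
    qed
  qed simp
  then show "pay f c S = ereal (sum (wts f c S) S)" by simp
qed

lemma pay_sub:
  assumes vi: "valid_instance A f c" and sm: "submodular_on A f" and S: "S \<subseteq> A"
    and z: "\<forall>i\<in>S. marg f S i = 0 \<longrightarrow> c i = 0" and T: "T \<subseteq> S"
  shows "pay f c T \<le> ereal (sum (wts f c S) T)"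
proof -
  have "pay f c T \<le> (\<Sum>i\<in>T. ereal (wts f c S i))"
    unfolding pay_def
  proof (rule sum_mono)
    fix i assume i: "i \<in> T"
    have mS: "0 \<le> marg f S i" by (rule marg_nonneg[OF vi S])
    have mT: "marg f S i \<le> marg f T i" using sm S T i unfolding submodular_on_def by blast
    have ci: "0 \<le> c i" using vi_facts(5)[OF vi, of i] i T S by blast
    show "(if marg f T i = 0 then if c i = 0 then 0 else \<infinity> else ereal (c i / marg f T i))
          \<le> ereal (wts f c S i)"
    proof (cases "marg f S i = 0")
      case True
      then have "c i = 0" using z i T by blast
      then show ?thesis using True unfolding wts_def by simp
    next
      case False
      then have p: "0 < marg f S i" using mS by simp
      then have "0 < marg f T i" using mT by simp
      moreover have "c i / marg f T i \<le> c i / marg f S i"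
        by (rule divide_left_mono[OF mT ci]) (use p mT in simp)
      ultimately show ?thesis using False unfolding wts_def by simp
    qed
  qed
  then show ?thesis by simp
qed

lemma ceil_bound:
  fixes b B :: real and m :: nat
  assumes "0 < b" "real m < 2 * B / b"
  shows "real m \<le> of_int \<lceil>2 * B / b\<rceil> - 1"
proof -
  have "real m < of_int \<lceil>2 * B / b\<rceil>" using assms(2) le_of_int_ceiling[of "2*B/b"] by linarith
  then have "int m < \<lceil>2 * B / b\<rceil>" by linarith
  then have "int m \<le> \<lceil>2 * B / b\<rceil> - 1" by simp
  then have "real_of_int (int m) \<le> real_of_int (\<lceil>2 * B / b\<rceil> - 1)" by (rule of_int_le_iff[THEN iffD2])
  then show ?thesis by simp
qed

lemma K_ge1:
  fixes b B :: real
  assumes "0 < b" "b \<le> B"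
  shows "1 \<le> (of_int \<lceil>2 * B / b\<rceil> - 1 :: real)"
proof -
  have "2 \<le> 2 * B / b" using assms by (simp add: field_simps)
  then have "\<lceil>2::real\<rceil> \<le> \<lceil>2 * B / b\<rceil>" by (rule ceiling_mono)
  then have "2 \<le> \<lceil>2 * B / b\<rceil>" by simp
  then show ?thesis by simp
qed

lemma upper:
  assumes ph: "phi = reward_obj \<or> phi = welfare_obj"
    and vi: "valid_instance A f c" and sm: "submodular_on A f" and cA: "card A \<le> n"
    and sing: "\<forall>i\<in>A. pay f c {i} \<le> ereal b" and b: "0 < b" "b \<le> B" and n: "1 \<le> n"
  shows "pof phi A f c b B \<le> min (of_int \<lceil>2 * B / b\<rceil> - 1) (real n)"
proof -
  define K where "K = min (of_int \<lceil>2 * B / b\<rceil> - 1) (real n)"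
  have K1: "1 \<le> K" unfolding K_def using K_ge1[OF b] n by simp
  define Mb where "Mb = max_obj phi A f c b"
  define MB where "MB = max_obj phi A f c B"
  have b0: "0 \<le> b" using b by simp
  have B0: "0 \<le> B" using b by simp
  have fA: "finite A" using vi_facts(1)[OF vi] .
  have Mbge: "\<And>S. S \<subseteq> A \<Longrightarrow> pay f c S \<le> ereal b \<Longrightarrow> phi f c S \<le> Mb"
    unfolding Mb_def by (rule maxobj_facts(1)[OF vi b0])
  have f0: "0 \<le> f {}" using vi_facts(2)[OF vi, of "{}"] by simp
  have Mb0: "f {} \<le> Mb" using Mbge[of "{}"] phi_empty[OF ph] b0 by (simp add: pay_empty)
  obtain S where S: "S \<subseteq> A" and pS: "pay f c S \<le> ereal B" and phS: "phi f c S = MB"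
    using maxobj_facts(2)[OF vi B0] unfolding MB_def by blast
  have fS: "finite S" using fA S by (rule finite_subset[rotated])
  have claim: "phi f c S \<le> K * Mb"
  proof (cases "S = {}")
    case True
    have "phi f c S \<le> Mb" using True Mb0 phi_empty[OF ph] by simp
    also have "Mb \<le> K * Mb" using K1 Mb0 f0 by (simp add: mult_le_cancel_right1)
    finally show ?thesis .
  next
    case False
    note z = pay_S(1)[OF vi S pS]
    have pe: "pay f c S = ereal (sum (wts f c S) S)" by (rule pay_S(2)[OF vi S pS])
    have W: "sum (wts f c S) S \<le> B" using pS pe by simp
    have wpos: "\<forall>i\<in>S. 0 \<le> wts f c S i" using wts_nonneg[OF vi S] by blast
    obtain PP where g: "goodpart b (wts f c S) S PP" and cPS: "card PP \<le> card S"
      and alt: "card PP = 1 \<or> real (card PP) * b / 2 < sum (wts f c S) S"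
      using binpack[OF fS False wpos b(1)] by blast
    have fin: "finite PP" and un: "\<Union>PP = S"
      and pr: "\<forall>P\<in>PP. P \<noteq> {} \<and> (card P = 1 \<or> sum (wts f c S) P \<le> b)"
      and dj: "\<forall>P\<in>PP. \<forall>Q\<in>PP. P \<noteq> Q \<longrightarrow> P \<inter> Q = {}" using g unfolding goodpart_def by auto
    have PS: "\<And>P. P \<in> PP \<Longrightarrow> P \<subseteq> S" using un by blast
    have fP: "\<forall>P\<in>PP. finite P" using PS fS finite_subset by blast
    have neP: "PP \<noteq> {}" using un False by auto
    have phiP: "\<And>P. P \<in> PP \<Longrightarrow> phi f c P \<le> Mb"
    proof -
      fix P assume P: "P \<in> PP"
      have PA: "P \<subseteq> A" using PS[OF P] S by blast
      have "pay f c P \<le> ereal b"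
      proof (cases "card P = 1")
        case True
        then obtain i where "P = {i}" by (rule card_1_singletonE)
        then show ?thesis using sing PA by auto
      next
        case False
        then have "sum (wts f c S) P \<le> b" using pr P by blast
        moreover have "pay f c P \<le> ereal (sum (wts f c S) P)"
          by (rule pay_sub[OF vi sm S z PS[OF P]])
        ultimately show ?thesis by (meson ereal_less_eq(3) order_trans)
      qed
      then show "phi f c P \<le> Mb" by (rule Mbge[OF PA])
    qed
    have "phi f c S = phi f c (\<Union>PP)" using un by simp
    also have "\<dots> \<le> (\<Sum>P\<in>PP. phi f c P)"
      by (rule phi_subadd[OF ph vi sm fin neP fP dj]) (use un S in simp)
    also have "\<dots> \<le> (\<Sum>P\<in>PP. Mb)" by (rule sum_mono) (rule phiP)
    also have "\<dots> = real (card PP) * Mb" by simp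
    also have "\<dots> \<le> K * Mb"
    proof (rule mult_right_mono)
      show "0 \<le> Mb" using Mb0 f0 by simp
      have c1: "real (card PP) \<le> real n" using cPS card_mono[OF fA S] cA by simp
      have c2: "real (card PP) \<le> of_int \<lceil>2 * B / b\<rceil> - 1"
        using alt
      proof
        assume "card PP = 1" then show ?thesis using K_ge1[OF b] by simp
      next
        assume "real (card PP) * b / 2 < sum (wts f c S) S"
        then have "real (card PP) * b / 2 < B" using W by simp
        then have "real (card PP) < 2 * B / b" using b(1) by (simp add: field_simps)
        then show ?thesis by (rule ceil_bound[OF b(1)])
      qed
      show "real (card PP) \<le> K" unfolding K_def using c1 c2 by simp
    qed
    finally show ?thesis .
  qed
  have "pof phi A f c b B = MB / Mb" unfolding pof_def MB_def Mb_def ..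
  also have "\<dots> \<le> K"
  proof (cases "Mb = 0")
    case True then show ?thesis using K1 by simp
  next
    case False
    then have "0 < Mb" using Mb0 f0 by simp
    then show ?thesis using claim phS by (simp add: pos_divide_le_eq)
  qed
  finally show ?thesis unfolding K_def .
qed




definition fI :: "nat \<Rightarrow> nat set \<Rightarrow> real" where
  "fI K S = real (card (S \<inter> {..<K})) / real K"

definition cI :: "nat \<Rightarrow> real \<Rightarrow> nat \<Rightarrow> real" where
  "cI K t i = t / real K"

lemma marg_I:
  assumes K: "1 \<le> K" and S: "S \<subseteq> {..<K}" and i: "i \<in> S"
  shows "marg (fI K) S i = 1 / real K"
proof -
  have fS: "finite S" using S finite_subset by blast
  have e1: "S \<inter> {..<K} = S" using S by blast
  have e2: "(S - {i}) \<inter> {..<K} = S - {i}" using S by blast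
  have c: "card (S - {i}) = card S - 1" using fS i by simp
  have c1: "card S \<ge> 1" using fS i by (metis One_nat_def Suc_leI card_gt_0_iff empty_iff)
  have "real (card S) - real (card (S - {i})) = 1" using c c1 by simp
  then show ?thesis unfolding marg_def fI_def e1 e2 by (simp add: diff_divide_distrib[symmetric])
qed

lemma pay_I:
  assumes K: "1 \<le> K" and S: "S \<subseteq> {..<K}"
  shows "pay (fI K) (cI K t) S = ereal (real (card S) * t)"
proof -
  have Kp: "real K > 0" using K by simp
  have "pay (fI K) (cI K t) S = (\<Sum>i\<in>S. ereal t)"
    unfolding pay_def
  proof (rule sum.cong)
    fix i assume i: "i \<in> S"
    show "(if marg (fI K) S i = 0 then if cI K t i = 0 then 0 else \<infinity> else ereal (cI K t i / marg (fI K) S i)) = ereal t"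
      using marg_I[OF K S i] Kp unfolding cI_def by simp
  qed simp
  then show ?thesis by simp
qed

lemma valid_I:
  assumes K: "1 \<le> K" and t: "0 \<le> t"
  shows "valid_instance {..<K} (fI K) (cI K t)" and "submodular_on {..<K} (fI K)"
proof -
  have Kp: "real K > 0" using K by simp
  show "valid_instance {..<K} (fI K) (cI K t)"
    unfolding valid_instance_def
  proof (intro conjI allI impI ballI)
    show "finite {..<K}" by simp
    fix S assume S: "S \<subseteq> {..<K}"
    have "card (S \<inter> {..<K}) \<le> card {..<K}" by (rule card_mono) auto
    then show "0 \<le> fI K S" "fI K S \<le> 1" unfolding fI_def using Kp by auto
  next
    fix S T assume "S \<subseteq> T" "T \<subseteq> {..<K}"
    then have "card (S \<inter> {..<K}) \<le> card (T \<inter> {..<K})" by (intro card_mono) auto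
    then show "fI K S \<le> fI K T" unfolding fI_def using Kp by (simp add: divide_right_mono)
  next
    fix i show "0 \<le> cI K t i" unfolding cI_def using t Kp by simp
  qed
  show "submodular_on {..<K} (fI K)"
    unfolding submodular_on_def
  proof (intro allI impI)
    fix S S' i assume "S \<subseteq> S'" "S' \<subseteq> {..<K}" "i \<in> S"
    then show "marg (fI K) S' i \<le> marg (fI K) S i"
      using marg_I[OF K, of S' i] marg_I[OF K, of S i] by auto
  qed
qed

lemma phi_I:
  assumes ph: "phi = reward_obj \<or> phi = welfare_obj" and K: "1 \<le> K" and S: "S \<subseteq> {..<K}"
  shows "phi (fI K) (cI K t) S = real (card S) * (if phi = reward_obj then 1 / real K else (1 - t) / real K)"
proof -
  have e1: "S \<inter> {..<K} = S" using S by blast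
  have d: "reward_obj \<noteq> welfare_obj"
  proof
    assume "reward_obj = welfare_obj"
    then have "reward_obj (\<lambda>_. 0) (\<lambda>_. 1) {0} = welfare_obj (\<lambda>_. 0) (\<lambda>_. 1) {0}" by simp
    then show False unfolding reward_obj_def welfare_obj_def by simp
  qed
  show ?thesis using ph
  proof
    assume "phi = reward_obj" then show ?thesis by (simp add: reward_obj_def fI_def e1)
  next
    assume p: "phi = welfare_obj"
    have "fI K S - sum (cI K t) S = real (card S) * ((1 - t) / real K)"
      unfolding fI_def cI_def e1 by (simp add: algebra_simps diff_divide_distrib)
    then show ?thesis using p d unfolding welfare_obj_def by simp
  qed
qed

lemma finite_objset:
  assumes "finite A"
  shows "finite {phi f c S | S. S \<subseteq> A \<and> P S}"
proof -
  have "{phi f c S | S. S \<subseteq> A \<and> P S} \<subseteq> (phi f c) ` Pow A" by auto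
  then show ?thesis using assms by (meson finite_Pow_iff finite_imageI finite_subset)
qed

lemma pof_I:
  assumes ph: "phi = reward_obj \<or> phi = welfare_obj" and K: "1 \<le> K"
    and t: "b / 2 < t" "t \<le> b" "t < 1" "real K * t \<le> B" and b: "0 < b"
  shows "pof phi {..<K} (fI K) (cI K t) b B = real K"
proof -
  define v where "v = (if phi = reward_obj then 1 / real K else (1 - t) / real K)"
  have Kp: "real K > 0" using K by simp
  have vp: "v > 0" unfolding v_def using Kp t by simp
  have phS: "\<And>S. S \<subseteq> {..<K} \<Longrightarrow> phi (fI K) (cI K t) S = real (card S) * v"
    using phi_I[OF ph K] unfolding v_def by blast
  have pS: "\<And>S. S \<subseteq> {..<K} \<Longrightarrow> pay (fI K) (cI K t) S = ereal (real (card S) * t)"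
    using pay_I[OF K] by blast
  have Mb: "max_obj phi {..<K} (fI K) (cI K t) b = v"
    unfolding max_obj_def
  proof (rule Max_eqI)
    show "finite {phi (fI K) (cI K t) S |S. S \<subseteq> {..<K} \<and> pay (fI K) (cI K t) S \<le> ereal b}"
      by (rule finite_objset) simp
    fix y assume "y \<in> {phi (fI K) (cI K t) S |S. S \<subseteq> {..<K} \<and> pay (fI K) (cI K t) S \<le> ereal b}"
    then obtain S where S: "S \<subseteq> {..<K}" "pay (fI K) (cI K t) S \<le> ereal b" and y: "y = phi (fI K) (cI K t) S"
      by blast
    have "real (card S) * t \<le> b" using S pS by simp
    then have "card S \<le> 1"
    proof -
      assume a: "real (card S) * t \<le> b"
      show "card S \<le> 1"
      proof (rule ccontr)
        assume "\<not> card S \<le> 1"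
        then have "real (card S) \<ge> 2" by simp
        then have "real (card S) * t \<ge> 2 * t" using t b by (intro mult_right_mono) auto
        then show False using a t by linarith
      qed
    qed
    then show "y \<le> v" using y phS[OF S(1)] vp by simp
  next
    have s0: "{0} \<subseteq> {..<K}" using K by auto
    have "pay (fI K) (cI K t) {0} \<le> ereal b" using pS[OF s0] t by simp
    moreover have "phi (fI K) (cI K t) {0} = v" using phS[OF s0] by simp
    ultimately show "v \<in> {phi (fI K) (cI K t) S |S. S \<subseteq> {..<K} \<and> pay (fI K) (cI K t) S \<le> ereal b}"
      using s0 by blast
  qed
  have MB: "max_obj phi {..<K} (fI K) (cI K t) B = real K * v"
    unfolding max_obj_def
  proof (rule Max_eqI)
    show "finite {phi (fI K) (cI K t) S |S. S \<subseteq> {..<K} \<and> pay (fI K) (cI K t) S \<le> ereal B}"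
      by (rule finite_objset) simp
    fix y assume "y \<in> {phi (fI K) (cI K t) S |S. S \<subseteq> {..<K} \<and> pay (fI K) (cI K t) S \<le> ereal B}"
    then obtain S where S: "S \<subseteq> {..<K}" and y: "y = phi (fI K) (cI K t) S"
      by blast
    have "card S \<le> card {..<K}" using S by (intro card_mono) auto
    then have "real (card S) \<le> real K" by simp
    then show "y \<le> real K * v" using y phS[OF S] vp by (simp add: mult_right_mono)
  next
    have s0: "{..<K} \<subseteq> {..<K}" by simp
    have "pay (fI K) (cI K t) {..<K} \<le> ereal B" using pS[OF s0] t by simp
    moreover have "phi (fI K) (cI K t) {..<K} = real K * v" using phS[OF s0] by simp
    ultimately show "real K * v \<in> {phi (fI K) (cI K t) S |S. S \<subseteq> {..<K} \<and> pay (fI K) (cI K t) S \<le> ereal B}"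
      by (intro CollectI exI[of _ "{..<K}"]) simp
  qed
  show ?thesis unfolding pof_def Mb MB using vp by simp
qed




lemma PoF_eq:
  assumes ph: "phi = reward_obj \<or> phi = welfare_obj"
    and b: "0 < b" "b \<le> B" "B \<le> 1" and n: "1 \<le> n"
  shows "PoF_Submodular phi n b B = ereal (min (of_int \<lceil>2 * B / b\<rceil> - 1) (real n))"
proof -
  define K where "K = min (of_int \<lceil>2 * B / b\<rceil> - 1) (real n)"
  define Kn where "Kn = nat (min (\<lceil>2 * B / b\<rceil> - 1) (int n))"
  have Kg: "1 \<le> (of_int \<lceil>2 * B / b\<rceil> - 1 :: real)" using K_ge1[OF b(1,2)] .
  then have Kgi: "1 \<le> \<lceil>2 * B / b\<rceil> - 1" by linarith
  have KnK: "real Kn = K" unfolding Kn_def K_def using Kgi n by (simp add: min_def)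
  have "1 \<le> K" unfolding K_def using Kg n by simp
  then have Kn1: "1 \<le> Kn" using KnK by simp
  have Knp: "0 < real Kn" using Kn1 by simp
  have "K \<le> of_int \<lceil>2 * B / b\<rceil> - 1" unfolding K_def by simp
  also have "\<dots> < 2 * B / b" using ceiling_correct[of "2 * B / b"] by simp
  finally have "real Kn < 2 * B / b" using KnK by simp
  then have "real Kn * b < 2 * B" using b(1) by (simp add: field_simps)
  then have hb: "b / 2 < B / real Kn" using Knp by (simp add: field_simps)
  define m where "m = min b (B / real Kn)"
  define t where "t = (b / 2 + m) / 2"
  have hm: "b / 2 < m" using hb b(1) unfolding m_def by simp
  have t1: "b / 2 < t" unfolding t_def using hm by simp
  have t2': "t < m" unfolding t_def using hm by simp
  have t2: "t < min b (B / real Kn)" using t2' unfolding m_def .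
  have t3: "t \<le> b" "t < 1" using t2 b by auto
  have "t < B / real Kn" using t2 by simp
  then have t4: "real Kn * t \<le> B" using Knp by (simp add: field_simps)
  have t0: "0 \<le> t" using t1 b(1) by simp
  let ?IS = "{(A, f, c). valid_instance A f c \<and> submodular_on A f \<and> card A \<le> n
                 \<and> (\<forall>i\<in>A. pay f c {i} \<le> ereal b)}"
  have le: "PoF_Submodular phi n b B \<le> ereal K"
    unfolding PoF_Submodular_def
  proof (rule SUP_least)
    fix I assume "I \<in> ?IS"
    then obtain A f c where I: "I = (A, f, c)" and vi: "valid_instance A f c" and sm: "submodular_on A f"
      and cA: "card A \<le> n" and sing: "\<forall>i\<in>A. pay f c {i} \<le> ereal b" by blast
    have "pof phi A f c b B \<le> K" unfolding K_def by (rule upper[OF ph vi sm cA sing b(1,2) n])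
    then show "ereal (case I of (A, f, c) \<Rightarrow> pof phi A f c b B) \<le> ereal K" using I by simp
  qed
  have mem: "({..<Kn}, fI Kn, cI Kn t) \<in> ?IS"
  proof -
    have "\<forall>i\<in>{..<Kn}. pay (fI Kn) (cI Kn t) {i} \<le> ereal b"
      using pay_I[OF Kn1, of "{_}" t] t3 by auto
    moreover have "card {..<Kn} \<le> n" unfolding Kn_def using n by simp
    ultimately show ?thesis using valid_I[OF Kn1 t0] by simp
  qed
  have "ereal K = ereal (case ({..<Kn}, fI Kn, cI Kn t) of (A, f, c) \<Rightarrow> pof phi A f c b B)"
    using pof_I[OF ph Kn1 t1 t3 t4 b(1)] KnK by simp
  also have "\<dots> \<le> PoF_Submodular phi n b B"
    unfolding PoF_Submodular_def by (rule SUP_upper[OF mem])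
  finally have ge: "ereal K \<le> PoF_Submodular phi n b B" .
  show ?thesis using antisym[OF le ge] unfolding K_def .
qed

theorem mainTheorem11:
  fixes b B :: real and n :: nat
  assumes "0 < b" "b \<le> B" "B \<le> 1" "1 \<le> n"
  shows "PoF_Reward_Submodular n b B = ereal (min (of_int \<lceil>2 * B / b\<rceil> - 1) (real n))
       \<and> PoF_Welfare_Submodular n b B = ereal (min (of_int \<lceil>2 * B / b\<rceil> - 1) (real n))
       \<and> min (of_int \<lceil>2 * B / b\<rceil> - 1) (real n) \<le> min (2 * B / b) (real n)"
proof (intro conjI)
  show "PoF_Reward_Submodular n b B = ereal (min (of_int \<lceil>2 * B / b\<rceil> - 1) (real n))"
    by (rule PoF_eq) (use assms in auto)
  show "PoF_Welfare_Submodular n b B = ereal (min (of_int \<lceil>2 * B / b\<rceil> - 1) (real n))"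
    by (rule PoF_eq) (use assms in auto)
  have "of_int \<lceil>2 * B / b\<rceil> - 1 \<le> 2 * B / b" using ceiling_correct[of "2 * B / b"] by simp
  then show "min (of_int \<lceil>2 * B / b\<rceil> - 1) (real n) \<le> min (2 * B / b) (real n)"
    by (rule min.mono) simp
qed


end
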